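(* For every integer $n\ge 2$, \[ \gamma_{2t}(K_n\Box K_n)=\begin{cases}3n/2, & n\equiv 0\pmod 4,\\ (3n+1)/2, & n\equiv 1\pmod 2,\\ (3n+2)/2, & n\equiv 2\pmod 4.\end{cases} \]
   Context: For a graph $G=(V,E)$, a set $S\subseteq V$ is a total $2$-dominating set if every vertex of $V$ (including those in $S$) is adjacent to at least $2$ vertices of $S$; $\gamma_{2t}(G)$ is the minimum cardinality of such a set. $G\Box H$ denotes the Cartesian product: vertex set $V(G)\times V(H)$, with $(u_1,v_1)\sim(u_2,v_2)$ iff either $u_1=u_2$ and $v_1\sim v_2$, or $v_1=v_2$ and $u_1\sim u_2$. $K_n$ is the complete graph on $n$ vertices. *)

theory Defs
  imports Main
begin

text \<open>A graph is given by a finite vertex set V and a symmetric, irreflexive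
adjacency relation adj. Only adjacencies between vertices of V matter.\<close>

definition total_k_dominating ::
  "nat \<Rightarrow> 'a set \<Rightarrow> ('a \<Rightarrow> 'a \<Rightarrow> bool) \<Rightarrow> 'a set \<Rightarrow> bool" where
  "total_k_dominating k V adj S \<longleftrightarrow>
     S \<subseteq> V \<and> (\<forall>v\<in>V. card {u \<in> S. adj v u} \<ge> k)"

definition gamma_2t :: "'a set \<Rightarrow> ('a \<Rightarrow> 'a \<Rightarrow> bool) \<Rightarrow> nat" where
  "gamma_2t V adj = (LEAST m. \<exists>S. total_k_dominating 2 V adj S \<and> card S = m)"

definition Kn_vertices :: "nat \<Rightarrow> nat set" where
  "Kn_vertices n = {0..<n}"

definition Kn_adj :: "nat \<Rightarrow> nat \<Rightarrow> bool" where
  "Kn_adj u v \<longleftrightarrow> u \<noteq> v"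

definition cart_vertices :: "'a set \<Rightarrow> 'b set \<Rightarrow> ('a \<times> 'b) set" where
  "cart_vertices V W = V \<times> W"

definition cart_adj ::
  "('a \<Rightarrow> 'a \<Rightarrow> bool) \<Rightarrow> ('b \<Rightarrow> 'b \<Rightarrow> bool) \<Rightarrow> ('a \<times> 'b) \<Rightarrow> ('a \<times> 'b) \<Rightarrow> bool" where
  "cart_adj adjG adjH p q \<longleftrightarrow>
     (fst p = fst q \<and> adjH (snd p) (snd q)) \<or> (snd p = snd q \<and> adjG (fst p) (fst q))"

end

theory Submission
  imports Defs Complex_Main
begin

abbreviation adj where "adj \<equiv> cart_adj Kn_adj Kn_adj"

lemma adj_iff: "adj (a,b) (c,d) \<longleftrightarrow> (a=c \<and> b\<noteq>d) \<or> (b=d \<and> a\<noteq>c)"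
  by (auto simp: cart_adj_def Kn_adj_def)

lemma V_eq: "cart_vertices (Kn_vertices n) (Kn_vertices n) = {0..<n}\<times>{0..<n}"
  by (simp add: cart_vertices_def Kn_vertices_def)

definition good :: "nat \<Rightarrow> (nat\<times>nat) set \<Rightarrow> bool" where
 "good n S \<longleftrightarrow> S \<subseteq> {0..<n}\<times>{0..<n} \<and> (\<forall>i<n. \<forall>j<n. 2 \<le> card {u\<in>S. adj (i,j) u})
   \<and> (\<forall>i<n. \<exists>j. (i,j)\<in>S) \<and> (\<forall>j<n. \<exists>i. (i,j)\<in>S)"

lemma filt_ins: "{u\<in>insert x A. P u} = (if P x then insert x {u\<in>A. P u} else {u\<in>A. P u})" by auto
lemma filt_emp: "{u\<in>{}. P u} = {}" by auto

lemma good2: "good 2 {(0, 0), (0, 1), (1, 0), (1, 1)}"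
  unfolding good_def
  apply (simp only: filt_ins filt_emp)
  apply (simp add: cart_adj_def Kn_adj_def All_less_Suc numeral_eq_Suc)
  by blast

lemma good3: "good 3 {(0, 0), (0, 1), (0, 2), (1, 0), (2, 0)}"
  unfolding good_def
  apply (simp only: filt_ins filt_emp)
  apply (simp add: cart_adj_def Kn_adj_def All_less_Suc numeral_eq_Suc)
  by blast

lemma good4: "good 4 {(0, 0), (0, 1), (0, 2), (1, 3), (2, 3), (3, 3)}"
  unfolding good_def
  apply (simp only: filt_ins filt_emp)
  apply (simp add: cart_adj_def Kn_adj_def All_less_Suc numeral_eq_Suc)
  by blast

lemma good5: "good 5 {(0, 0), (0, 1), (0, 2), (0, 3), (1, 4), (2, 4), (3, 4), (4, 4)}"
  unfolding good_def
  apply (simp only: filt_ins filt_emp)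
  apply (simp add: cart_adj_def Kn_adj_def All_less_Suc numeral_eq_Suc)
  by blast

definition sh :: "nat \<Rightarrow> (nat\<times>nat) set \<Rightarrow> (nat\<times>nat) set" where
  "sh m S = (\<lambda>(a,b). (a+m,b+m)) ` S"

lemma sh_inj: "inj_on (\<lambda>(a::nat,b::nat). (a+m,b+m)) X"
  by (auto simp: inj_on_def)

lemma comb:
  assumes g1: "good n1 S1" and g2: "good n2 S2"
  shows "good (n1+n2) (S1 \<union> sh n1 S2) \<and> card (S1 \<union> sh n1 S2) = card S1 + card S2"
proof -
  let ?f = "\<lambda>(a::nat,b::nat). (a+n1,b+n1)"
  let ?T = "S1 \<union> sh n1 S2"
  have s1: "S1 \<subseteq> {0..<n1}\<times>{0..<n1}" and s2: "S2 \<subseteq> {0..<n2}\<times>{0..<n2}"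
    using g1 g2 by (auto simp: good_def)
  have f1: "finite S1" using s1 finite_subset by blast
  have f2: "finite S2" using s2 finite_subset by blast
  have fT: "finite ?T" using f1 f2 by (simp add: sh_def)
  have disj: "S1 \<inter> sh n1 S2 = {}" using s1 by (auto simp: sh_def)
  have cT: "card ?T = card S1 + card S2"
    using card_Un_disjoint[OF f1 _ disj] f2 card_image[OF sh_inj]
    by (simp add: sh_def)
  have sT: "?T \<subseteq> {0..<n1+n2}\<times>{0..<n1+n2}" using s1 s2 by (auto simp: sh_def)
  have rows: "\<forall>i<n1+n2. \<exists>j. (i,j)\<in>?T"
  proof (intro allI impI)
    fix i assume i: "i < n1+n2"
    show "\<exists>j. (i,j)\<in>?T"
    proof (cases "i < n1")
      case True then show ?thesis using g1 by (auto simp: good_def)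
    next
      case False
      then have "i - n1 < n2" using i by arith
      then obtain j where "(i-n1,j)\<in>S2" using g2 unfolding good_def by blast
      then have "(i, j+n1) \<in> sh n1 S2" using False unfolding sh_def by (auto intro!: image_eqI[where x="(i-n1,j)"])
      then show ?thesis by blast
    qed
  qed
  have cols: "\<forall>j<n1+n2. \<exists>i. (i,j)\<in>?T"
  proof (intro allI impI)
    fix j assume j: "j < n1+n2"
    show "\<exists>i. (i,j)\<in>?T"
    proof (cases "j < n1")
      case True then show ?thesis using g1 by (auto simp: good_def)
    next
      case False
      then have "j - n1 < n2" using j by arith
      then obtain i where "(i,j-n1)\<in>S2" using g2 unfolding good_def by blast
      then have "(i+n1, j) \<in> sh n1 S2" using False unfolding sh_def by (auto intro!: image_eqI[where x="(i,j-n1)"])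
      then show ?thesis by blast
    qed
  qed
  have dom: "\<forall>i<n1+n2. \<forall>j<n1+n2. 2 \<le> card {u\<in>?T. adj (i,j) u}"
  proof (intro allI impI)
    fix i j assume i: "i<n1+n2" and j: "j<n1+n2"
    have fN: "finite {u\<in>?T. adj (i,j) u}" using fT by simp
    show "2 \<le> card {u\<in>?T. adj (i,j) u}"
    proof (cases "i < n1")
      case ci: True
      show ?thesis
      proof (cases "j < n1")
        case True
        have "{u\<in>S1. adj (i,j) u} \<subseteq> {u\<in>?T. adj (i,j) u}" by auto
        moreover have "2 \<le> card {u\<in>S1. adj (i,j) u}" using g1 ci True by (auto simp: good_def)
        ultimately show ?thesis using card_mono[OF fN, of "{u\<in>S1. adj (i,j) u}"] by linarith
      next
        case False
        obtain j' where j': "(i,j')\<in>S1" using g1 ci by (auto simp: good_def)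
        have j'l: "j' < n1" using j' s1 by auto
        have "j - n1 < n2" using j False by arith
        then obtain i' where i': "(i',j-n1)\<in>S2" using g2 unfolding good_def by blast
        have m2: "(i'+n1, j) \<in> sh n1 S2" using i' False unfolding sh_def by (auto intro!: image_eqI[where x="(i',j-n1)"])
        have "{(i,j'), (i'+n1,j)} \<subseteq> {u\<in>?T. adj (i,j) u}"
          using j' m2 j'l False ci by (auto simp: adj_iff)
        then have "card {(i,j'), (i'+n1,j)} \<le> card {u\<in>?T. adj (i,j) u}" by (rule card_mono[OF fN])
        moreover have "card {(i,j'), (i'+n1,j)} = 2" using ci by auto
        ultimately show ?thesis by linarith
      qed
    next
      case ci: False
      show ?thesis
      proof (cases "j < n1")
        case True
        obtain i' where i': "(i',j)\<in>S1" using g1 True by (auto simp: good_def)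
        have i'l: "i' < n1" using i' s1 by auto
        have "i - n1 < n2" using i ci by arith
        then obtain j' where j': "(i-n1,j')\<in>S2" using g2 unfolding good_def by blast
        have m2: "(i, j'+n1) \<in> sh n1 S2" using j' ci unfolding sh_def by (auto intro!: image_eqI[where x="(i-n1,j')"])
        have "{(i',j), (i,j'+n1)} \<subseteq> {u\<in>?T. adj (i,j) u}"
          using i' m2 i'l True ci by (auto simp: adj_iff)
        then have "card {(i',j), (i,j'+n1)} \<le> card {u\<in>?T. adj (i,j) u}" by (rule card_mono[OF fN])
        moreover have "card {(i',j), (i,j'+n1)} = 2" using True by auto
        ultimately show ?thesis by linarith
      next
        case False
        have ii: "i - n1 < n2" "j - n1 < n2" using i j ci False by arith+
        have 2: "2 \<le> card {u\<in>S2. adj (i-n1,j-n1) u}" using g2 ii unfolding good_def by blast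
        have sub: "?f ` {u\<in>S2. adj (i-n1,j-n1) u} \<subseteq> {u\<in>?T. adj (i,j) u}"
        proof
          fix v assume "v \<in> ?f ` {u\<in>S2. adj (i-n1,j-n1) u}"
          then obtain a b where ab: "(a,b) \<in> S2" "adj (i-n1,j-n1) (a,b)" "v = (a+n1,b+n1)" by auto
          have "(a+n1,b+n1) \<in> sh n1 S2" unfolding sh_def using ab(1) by (intro image_eqI[of _ _ "(a,b)"]) auto
          moreover have "adj (i,j) (a+n1,b+n1)" using ab(2) ci False unfolding adj_iff by arith
          ultimately show "v \<in> {u\<in>?T. adj (i,j) u}" using ab(3) by blast
        qed
        have "card (?f ` {u\<in>S2. adj (i-n1,j-n1) u}) = card {u\<in>S2. adj (i-n1,j-n1) u}"
          by (rule card_image[OF sh_inj])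
        moreover have "card (?f ` {u\<in>S2. adj (i-n1,j-n1) u}) \<le> card {u\<in>?T. adj (i,j) u}"
          by (rule card_mono[OF fN sub])
        ultimately show ?thesis using 2 by linarith
      qed
    qed
  qed
  show ?thesis using sT rows cols dom cT by (simp add: good_def)
qed

lemma good0: "good 0 {}" by (simp add: good_def)

definition B4 :: "(nat\<times>nat) set" where "B4 = {(0, 0), (0, 1), (0, 2), (1, 3), (2, 3), (3, 3)}"
lemma c4: "card B4 = 6" unfolding B4_def by simp

lemma good4k: "\<exists>S. good (4*k) S \<and> card S = 6*k"
proof (induction k)
  case 0 then show ?case using good0 by auto
next
  case (Suc k)
  then obtain S where S: "good (4*k) S" "card S = 6*k" by blast
  have c: "good (4*k+4) (S \<union> sh (4*k) B4) \<and> card (S \<union> sh (4*k) B4) = card S + card B4"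
    unfolding B4_def by (rule comb[OF S(1) good4])
  have e: "4 * Suc k = 4*k+4" "6 * Suc k = card S + card B4" using S(2) c4 by simp_all
  show ?case unfolding e using c by blast
qed

lemma good_ex: "\<exists>S. good (4*k+m) S \<and> card S = 6*k+c" if "good m B" "card B = c" for B m c k
proof -
  obtain S where S: "good (4*k) S" "card S = 6*k" using good4k by blast
  have c: "good (4*k+m) (S \<union> sh (4*k) B) \<and> card (S \<union> sh (4*k) B) = card S + card B"
    by (rule comb[OF S(1) that(1)])
  show ?thesis
  proof (intro exI conjI)
    show "good (4*k+m) (S \<union> sh (4*k) B)" using c by blast
    show "card (S \<union> sh (4*k) B) = 6*k+c" using c S(2) that(2) by simp
  qed
qed


lemma fin_row: "finite S \<Longrightarrow> finite {y. (i,y)\<in>S}"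
  apply (rule finite_subset[of _ "snd ` S"]) apply (force simp: image_iff) by simp
lemma fin_col: "finite S \<Longrightarrow> finite {x. (x,j)\<in>S}"
  apply (rule finite_subset[of _ "fst ` S"]) apply (force simp: image_iff) by simp

lemma nb_le:
  assumes "finite S"
  shows "card {u\<in>S. adj (i,j) u} \<le> card ({y. (i,y)\<in>S} - {j}) + card ({x. (x,j)\<in>S} - {i})"
proof -
  have "{u\<in>S. adj (i,j) u} \<subseteq> Pair i ` ({y. (i,y)\<in>S} - {j}) \<union> (\<lambda>x. (x,j)) ` ({x. (x,j)\<in>S} - {i})"
  proof
    fix u assume "u \<in> {u\<in>S. adj (i,j) u}"
    then obtain a b where u: "u = (a,b)" "(a,b)\<in>S" "adj (i,j) (a,b)" by (cases u) auto
    then show "u \<in> Pair i ` ({y. (i,y)\<in>S} - {j}) \<union> (\<lambda>x. (x,j)) ` ({x. (x,j)\<in>S} - {i})"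
      by (auto simp: adj_iff)
  qed
  then have "card {u\<in>S. adj (i,j) u} \<le> card (Pair i ` ({y. (i,y)\<in>S} - {j}) \<union> (\<lambda>x. (x,j)) ` ({x. (x,j)\<in>S} - {i}))"
    by (intro card_mono finite_UnI finite_imageI finite_Diff fin_row fin_col assms)
  also have "\<dots> \<le> card (Pair i ` ({y. (i,y)\<in>S} - {j})) + card ((\<lambda>x. (x,j)) ` ({x. (x,j)\<in>S} - {i}))"
    by (rule card_Un_le)
  also have "\<dots> \<le> card ({y. (i,y)\<in>S} - {j}) + card ({x. (x,j)\<in>S} - {i})"
    by (intro add_mono card_image_le) (auto simp: assms fin_row fin_col)
  finally show ?thesis .
qed

lemma T_Sigma: "T \<subseteq> {0..<n}\<times>{0..<(n::nat)} \<Longrightarrow> Sigma {0..<n} (\<lambda>i. {y. (i,y)\<in>T}) = T"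
  by auto

lemma card_rows: fixes n :: nat assumes "T \<subseteq> {0..<n}\<times>{0..<n}"
  shows "card T = (\<Sum>i\<in>{0..<n}. card {y. (i,y)\<in>T})"
proof -
  have f: "finite T" using assms finite_subset by blast
  have fr: "\<forall>a\<in>{0..<n}. finite {y. (a,y)\<in>T}" using fin_row[OF f] by blast
  have c: "card (Sigma {0..<n} (\<lambda>i. {y. (i,y)\<in>T})) = (\<Sum>i\<in>{0..<n}. card {y. (i,y)\<in>T})"
    by (rule card_SigmaI[OF finite_atLeastLessThan fr])
  then show ?thesis unfolding T_Sigma[OF assms] .
qed

lemma sum_rows: fixes n :: nat assumes "T \<subseteq> {0..<n}\<times>{0..<n}" "\<forall>i<n. \<exists>j. (i,j)\<in>T"
  shows "(\<Sum>p\<in>T. 1 / real (card {y. (fst p,y)\<in>T})) = real n"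
proof -
  have f: "finite T" using assms finite_subset by blast
  have fr: "\<forall>a\<in>{0..<n}. finite {y. (a,y)\<in>T}" using fin_row[OF f] by blast
  have s1: "(\<Sum>i\<in>{0..<n}. \<Sum>y\<in>{y. (i,y)\<in>T}. 1 / real (card {y. (i,y)\<in>T}))
       = (\<Sum>p\<in>Sigma {0..<n} (\<lambda>i. {y. (i,y)\<in>T}). (\<lambda>(i,y). 1 / real (card {y. (i,y)\<in>T})) p)"
    by (rule sum.Sigma[OF finite_atLeastLessThan fr])
  have s2: "(\<Sum>p\<in>Sigma {0..<n} (\<lambda>i. {y. (i,y)\<in>T}). (\<lambda>(i,y). 1 / real (card {y. (i,y)\<in>T})) p)
     = (\<Sum>p\<in>T. 1 / real (card {y. (fst p,y)\<in>T}))"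
    unfolding T_Sigma[OF assms(1)] by (simp add: case_prod_unfold)
  have "(\<Sum>p\<in>T. 1 / real (card {y. (fst p,y)\<in>T}))
      = (\<Sum>i\<in>{0..<n}. \<Sum>y\<in>{y. (i,y)\<in>T}. 1 / real (card {y. (i,y)\<in>T}))"
    using s1 s2 by simp
  also have "\<dots> = (\<Sum>i\<in>{0..<n}. 1)"
  proof (rule sum.cong)
    fix i assume "i \<in> {0..<n}"
    then obtain j where "(i,j)\<in>T" using assms(2) by auto
    then have "card {y. (i,y)\<in>T} \<noteq> 0" using fin_row[OF f, of i] by auto
    then show "(\<Sum>y\<in>{y. (i,y)\<in>T}. 1 / real (card {y. (i,y)\<in>T})) = 1" by simp
  qed simp
  finally show ?thesis by simp
qed

lemma swap_row: "{y. (j,y) \<in> prod.swap ` S} = {x. (x,j)\<in>S}"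
proof (intro set_eqI iffI)
  fix x assume "x \<in> {x. (x,j)\<in>S}"
  then have "(j,x) = prod.swap (x,j)" "(x,j)\<in>S" by auto
  then show "x \<in> {y. (j,y) \<in> prod.swap ` S}" by (metis (mono_tags) image_eqI mem_Collect_eq)
qed auto

lemma sum_cols: fixes n :: nat assumes "S \<subseteq> {0..<n}\<times>{0..<n}" "\<forall>j<n. \<exists>i. (i,j)\<in>S"
  shows "(\<Sum>p\<in>S. 1 / real (card {x. (x,snd p)\<in>S})) = real n"
proof -
  have a: "prod.swap ` S \<subseteq> {0..<n}\<times>{0..<n}" using assms(1) by auto
  have b: "\<forall>i<n. \<exists>j. (i,j)\<in>prod.swap ` S"
  proof (intro allI impI)
    fix i assume "i<n"
    then obtain j where "(j,i)\<in>S" using assms(2) by blast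
    then show "\<exists>j. (i,j) \<in> prod.swap ` S" by (intro exI[of _ j] image_eqI[of _ _ "(j,i)"]) auto
  qed
  have "(\<Sum>p\<in>prod.swap ` S. 1 / real (card {y. (fst p,y)\<in>prod.swap ` S})) = real n"
    by (rule sum_rows[OF a b])
  moreover have "(\<Sum>p\<in>prod.swap ` S. 1 / real (card {y. (fst p,y)\<in>prod.swap ` S}))
     = (\<Sum>p\<in>S. 1 / real (card {y. (snd p,y)\<in>prod.swap ` S}))"
    by (simp add: sum.reindex)
  ultimately show ?thesis by (simp only: swap_row)
qed

lemma card_cols: fixes n :: nat assumes "S \<subseteq> {0..<n}\<times>{0..<n}"
  shows "card S = (\<Sum>j\<in>{0..<n}. card {x. (x,j)\<in>S})"
proof -
  have a: "prod.swap ` S \<subseteq> {0..<n}\<times>{0..<n}" using assms(1) by auto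
  have "card (prod.swap ` S) = card S" by (simp add: card_image)
  then show ?thesis using card_rows[OF a] by (simp add: swap_row)
qed

lemma wlem:
  assumes "(r::nat) \<ge> 1" "c \<ge> 1" "r + c \<ge> 4"
  shows "1/real r + 1/real c \<le> 4/3 \<and> (1/real r + 1/real c = 4/3 \<longrightarrow> r = 1 \<or> r = 3)"
proof -
  have ic: "1/real c \<le> 1" using assms by simp
  have ir: "1/real r \<le> 1" using assms by simp
  consider "r = 1" | "r = 2" | "r = 3" | "r \<ge> 4" using assms(1) by linarith
  then show ?thesis
  proof cases
    case 1
    then have "real c \<ge> 3" using assms by simp
    then have "1/real c \<le> 1/3" by (simp add: field_simps)
    then have "1/real r + 1/real c \<le> 4/3" using 1 by simp
    then show ?thesis using 1 by blast
  next
    case 2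
    then have "real c \<ge> 2" using assms by simp
    then have "1/real c \<le> 1/2" by (simp add: field_simps)
    then have "1/real r + 1/real c < 4/3" using 2 by simp
    then show ?thesis by simp
  next
    case 3
    then have "1/real r + 1/real c \<le> 4/3" using ic by simp
    then show ?thesis using 3 by blast
  next
    case 4
    then have "real r \<ge> 4" by simp
    then have "1/real r \<le> 1/4" by (simp add: field_simps)
    then have "1/real r + 1/real c < 4/3" using ic by linarith
    then show ?thesis by simp
  qed
qed



abbreviation ff :: "nat \<Rightarrow> nat" where "ff n \<equiv> (if n mod 4 = 0 then 3 * n div 2
     else if odd n then (3 * n + 1) div 2
     else (3 * n + 2) div 2)"
lemma f0: "ff (4*k) = 6*k" by simp
lemma f1: "ff (4*k+1) = 6*k+2"
proof -
  have "(4*k+1) mod 4 = 1" by simp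
  moreover have "odd (4*k+1)" by simp
  moreover have "(3*(4*k+1)+1) div 2 = 6*k+2" by simp
  ultimately show ?thesis by simp
qed
lemma f2: "ff (4*k+2) = 6*k+4"
proof -
  have "(4*k+2) mod 4 = 2" by presburger
  moreover have "\<not> odd (4*k+2)" by simp
  moreover have "(3*(4*k+2)+2) div 2 = 6*k+4" by simp
  ultimately show ?thesis by simp
qed
lemma f3: "ff (4*k+3) = 6*k+5"
proof -
  have "(4*k+3) mod 4 = 3" by simp
  moreover have "odd (4*k+3)" by simp
  moreover have "(3*(4*k+3)+1) div 2 = 6*k+5" by simp
  ultimately show ?thesis by simp
qed
lemma fle: assumes "(3::nat)*n \<le> 2*m" "2*m = 3*n \<longrightarrow> 4 dvd n" shows "ff n \<le> m"
proof -
  define k where "k = n div 4"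
  define r where "r = n mod 4"
  have n: "n = 4*k + r" "r < 4" unfolding k_def r_def by auto
  consider "r = 0" | "r = 1" | "r = 2" | "r = 3" using n(2) by linarith
  then show ?thesis
  proof cases
    case 1 then show ?thesis using assms(1) n f0[of k] by simp
  next
    case 2 then show ?thesis using assms(1) n f1[of k] by simp
  next
    case 3
    have "n mod 4 = 2" using r_def 3 by simp
    then have "\<not> 4 dvd n" by (simp add: dvd_eq_mod_eq_0)
    then have "2*m \<noteq> 12*k+6" using assms(2) n 3 by auto
    then show ?thesis using assms(1) n f2[of k] 3 by simp
  next
    case 4 then show ?thesis using assms(1) n f3[of k] by simp
  qed
qed

lemma c2: "card {(0::nat, 0::nat), (0, 1), (1, 0), (1, 1)} = 4" by simp
lemma c3: "card {(0::nat, 0::nat), (0, 1), (0, 2), (1, 0), (2, 0)} = 5" by simp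
lemma c5: "card {(0::nat, 0::nat), (0, 1), (0, 2), (0, 3), (1, 4), (2, 4), (3, 4), (4, 4)} = 8" by simp

lemma lower:
  fixes n :: nat
  assumes sub: "S \<subseteq> {0..<n}\<times>{0..<n}" and dom: "\<forall>i<n. \<forall>j<n. 2 \<le> card {u\<in>S. adj (i,j) u}"
  shows "3*n \<le> 2*card S \<and> (2*card S = 3*n \<longrightarrow> 4 dvd n)"
proof -
  have f: "finite S" using sub finite_subset by blast
  have H: "2 \<le> card ({y. (i,y)\<in>S} - {j}) + card ({x. (x,j)\<in>S} - {i})" if "i<n" "j<n" for i j
  proof -
    have "2 \<le> card {u\<in>S. adj (i,j) u}" using dom that by blast
    then show ?thesis using nb_le[OF f, of i j] by linarith
  qed
  show ?thesis
  proof (cases "\<exists>i<n. {y. (i,y)\<in>S} = {}")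
    case True
    then obtain i where i: "i<n" "{y. (i,y)\<in>S} = {}" by blast
    have "2 \<le> card {x. (x,j)\<in>S}" if "j<n" for j
    proof -
      have "2 \<le> card ({x. (x,j)\<in>S} - {i})" using H[OF i(1) that] i(2) by simp
      also have "\<dots> \<le> card {x. (x,j)\<in>S}" by (rule card_mono) (auto simp: fin_col f)
      finally show ?thesis .
    qed
    then have "(\<Sum>j\<in>{0..<n}. 2) \<le> (\<Sum>j\<in>{0..<n}. card {x. (x,j)\<in>S})"
      by (intro sum_mono) auto
    then have "2*n \<le> card S" using card_cols[OF sub] by simp
    then have "3*n \<le> 2*card S" "2*card S = 3*n \<longrightarrow> n = 0" by linarith+
    then show ?thesis by auto
  next
    case nR: False
    show ?thesis
    proof (cases "\<exists>j<n. {x. (x,j)\<in>S} = {}")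
      case True
      then obtain j where j: "j<n" "{x. (x,j)\<in>S} = {}" by blast
      have "2 \<le> card {y. (i,y)\<in>S}" if "i<n" for i
      proof -
        have "2 \<le> card ({y. (i,y)\<in>S} - {j})" using H[OF that j(1)] j(2) by simp
        also have "\<dots> \<le> card {y. (i,y)\<in>S}" by (rule card_mono) (auto simp: fin_row f)
        finally show ?thesis .
      qed
      then have "(\<Sum>i\<in>{0..<n}. 2) \<le> (\<Sum>i\<in>{0..<n}. card {y. (i,y)\<in>S})"
        by (intro sum_mono) auto
      then have "2*n \<le> card S" using card_rows[OF sub] by simp
      then have "3*n \<le> 2*card S" "2*card S = 3*n \<longrightarrow> n = 0" by linarith+
      then show ?thesis by auto
    next
      case nC: False
      have rows: "\<forall>i<n. \<exists>j. (i,j)\<in>S" using nR by auto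
      have cols: "\<forall>j<n. \<exists>i. (i,j)\<in>S" using nC by auto
      define w where "w p = 1 / real (card {y. (fst p,y)\<in>S}) + 1 / real (card {x. (x,snd p)\<in>S})" for p
      have W: "w p \<le> 4/3 \<and> (w p = 4/3 \<longrightarrow> card {y. (fst p,y)\<in>S} = 1 \<or> card {y. (fst p,y)\<in>S} = 3)"
        if p: "p \<in> S" for p
      proof -
        obtain i j where ij: "p = (i,j)" by (cases p)
        have ijn: "i<n" "j<n" using p sub ij by auto
        have r1: "card {y. (i,y)\<in>S} \<ge> 1" using p ij fin_row[OF f, of i]
          by (metis (mono_tags, lifting) One_nat_def Suc_leI card_gt_0_iff empty_iff mem_Collect_eq)
        have c1: "card {x. (x,j)\<in>S} \<ge> 1" using p ij fin_col[OF f, of j]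
          by (metis (mono_tags, lifting) One_nat_def Suc_leI card_gt_0_iff empty_iff mem_Collect_eq)
        have "card ({y. (i,y)\<in>S} - {j}) = card {y. (i,y)\<in>S} - 1"
          using p ij fin_row[OF f, of i] by (simp add: card_Diff_singleton)
        moreover have "card ({x. (x,j)\<in>S} - {i}) = card {x. (x,j)\<in>S} - 1"
          using p ij fin_col[OF f, of j] by (simp add: card_Diff_singleton)
        ultimately have "card {y. (i,y)\<in>S} + card {x. (x,j)\<in>S} \<ge> 4" using H[OF ijn] r1 c1 by linarith
        from wlem[OF r1 c1 this] show ?thesis unfolding w_def ij by simp
      qed
      have sw: "(\<Sum>p\<in>S. w p) = 2 * real n"
        unfolding w_def sum.distrib sum_rows[OF sub rows] sum_cols[OF sub cols] by simp
      have "(\<Sum>p\<in>S. w p) \<le> real (card S) * (4/3)" by (rule sum_bounded_above) (use W in auto)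
      then have le: "3*n \<le> 2*card S" using sw by linarith
      have eq: "4 dvd n" if e: "2*card S = 3*n"
      proof -
        have e': "2 * real (card S) = 3 * real n" using e by (metis of_nat_mult of_nat_numeral)
        have "(\<Sum>p\<in>S. 4/3 - w p) = real (card S) * (4/3) - 2 * real n"
          using sw by (simp add: sum_subtractf)
        also have "\<dots> = 0" using e' by simp
        finally have z: "(\<Sum>p\<in>S. 4/3 - w p) = 0" .
        have iff: "(\<Sum>p\<in>S. 4/3 - w p) = 0 \<longleftrightarrow> (\<forall>p\<in>S. 4/3 - w p = 0)"
          by (rule sum_nonneg_eq_0_iff[OF f]) (use W in auto)
        have a: "\<forall>p\<in>S. 4/3 - w p = 0" using iff z by blast
        have odd_r: "odd (card {y. (i,y)\<in>S})" if il: "i<n" for i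
        proof -
          obtain j where "(i,j)\<in>S" using rows il by blast
          then show ?thesis using W[of "(i,j)"] a by fastforce
        qed
        have "card S = (\<Sum>i\<in>{0..<n}. card {y. (i,y)\<in>S})" by (rule card_rows[OF sub])
        also have "\<dots> = (\<Sum>i\<in>{0..<n}. 2 * (card {y. (i,y)\<in>S} div 2) + 1)"
          by (rule sum.cong) (use odd_r in auto)
        also have "\<dots> = 2 * (\<Sum>i\<in>{0..<n}. card {y. (i,y)\<in>S} div 2) + n"
          unfolding sum.distrib sum_distrib_left by simp
        finally have "card S = 2 * (\<Sum>i\<in>{0..<n}. card {y. (i,y)\<in>S} div 2) + n" .
        then have "n = 4 * (\<Sum>i\<in>{0..<n}. card {y. (i,y)\<in>S} div 2)" using e by linarith
        then show ?thesis by (metis dvd_triv_left)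
      qed
      show ?thesis using le eq by blast
    qed
  qed
qed

theorem theorem9:
  fixes n :: nat
  assumes "n \<ge> 2"
  shows "gamma_2t (cart_vertices (Kn_vertices n) (Kn_vertices n)) (cart_adj Kn_adj Kn_adj) =
    (if n mod 4 = 0 then 3 * n div 2
     else if odd n then (3 * n + 1) div 2
     else (3 * n + 2) div 2)"
proof -
  let ?f = "(if n mod 4 = 0 then 3 * n div 2
     else if odd n then (3 * n + 1) div 2
     else (3 * n + 2) div 2)"
  have tkd: "total_k_dominating 2 (cart_vertices (Kn_vertices n) (Kn_vertices n)) adj S
     \<longleftrightarrow> S \<subseteq> {0..<n}\<times>{0..<n} \<and> (\<forall>i<n. \<forall>j<n. 2 \<le> card {u\<in>S. adj (i,j) u})" for S
    unfolding total_k_dominating_def V_eq by auto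
  have ex: "\<exists>S. good n S \<and> card S = ?f"
  proof -
    define k where "k = n div 4"
    define m where "m = n mod 4"
    have km: "n = 4*k + m" "m < 4" unfolding k_def m_def by auto
    consider "m = 0" | "m = 1" | "m = 2" | "m = 3" using km(2) by linarith
    then show ?thesis
    proof cases
      case 1
      obtain S where S: "good (4*k) S" "card S = 6*k" using good4k by blast
      have nn: "n = 4*k" using km 1 by simp
      show ?thesis unfolding nn f0 using S by blast
    next
      case 2
      then have k: "k \<ge> 1" using km assms by simp
      have nn: "n = 4*(k-1) + 5" using km 2 k by simp
      have nn': "n = 4*k + 1" using km 2 by simp
      obtain S where S: "good (4*(k-1)+5) S" "card S = 6*(k-1)+8"
        using good_ex[OF good5 c5, of "k-1"] by blast
      have gS: "good n S" using S(1) unfolding nn .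
      have cS: "card S = 6*k+2" using S(2) k by simp
      show ?thesis unfolding nn' f1 using gS cS nn' by blast
    next
      case 3
      obtain S where S: "good (4*k+2) S" "card S = 6*k+4" using good_ex[OF good2 c2, of k] by blast
      have nn: "n = 4*k+2" using km 3 by simp
      show ?thesis unfolding nn f2 using S by blast
    next
      case 4
      obtain S where S: "good (4*k+3) S" "card S = 6*k+5" using good_ex[OF good3 c3, of k] by blast
      have nn: "n = 4*k+3" using km 4 by simp
      show ?thesis unfolding nn f3 using S by blast
    qed
  qed
  show ?thesis unfolding gamma_2t_def
  proof (rule Least_equality)
    show "\<exists>S. total_k_dominating 2 (cart_vertices (Kn_vertices n) (Kn_vertices n)) adj S \<and> card S = ?f"
    proof -
      obtain S where S: "good n S" "card S = ?f" using ex by blast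
      have "total_k_dominating 2 (cart_vertices (Kn_vertices n) (Kn_vertices n)) adj S"
        using S(1) unfolding tkd good_def by (intro conjI) auto
      then show ?thesis using S(2) by (intro exI[of _ S] conjI)
    qed
  next
    fix m assume "\<exists>S. total_k_dominating 2 (cart_vertices (Kn_vertices n) (Kn_vertices n)) adj S \<and> card S = m"
    then obtain S where S0: "total_k_dominating 2 (cart_vertices (Kn_vertices n) (Kn_vertices n)) adj S" "card S = m"
      by blast
    have S: "S \<subseteq> {0..<n}\<times>{0..<n}" "\<forall>i<n. \<forall>j<n. 2 \<le> card {u\<in>S. adj (i,j) u}"
      using S0(1) unfolding tkd by auto
    have "3*n \<le> 2*card S \<and> (2*card S = 3*n \<longrightarrow> 4 dvd n)" by (rule lower[OF S(1,2)])
    then have "3*n \<le> 2*m" "2*m = 3*n \<longrightarrow> 4 dvd n" using S0(2) by auto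
    then show "?f \<le> m" by (rule fle)
  qed
qed

end
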